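(* Let $\Theta\subseteq\mathbb{R}^p$ be open and $\mathcal{P}=\{P_\theta:\theta\in\Theta\}\subseteq\mathcal{P}_{2,\mathrm{ac}}(\mathbb{R})$, and let $F_\theta^{-1}$ be the quantile function of $P_\theta$. Then $\mathcal{P}$ is DWS at $\theta\in\Theta$ if and only if $\nabla_\theta F_\theta^{-1}(\cdot)$ exists and lies in $L^2([0,1];\mathbb{R}^p)$, in which case the Wasserstein information matrix is $J(\theta)=\int_0^1\nabla_\theta F_\theta^{-1}(u)\,(\nabla_\theta F_\theta^{-1}(u))^\top\,\mathrm{d}u$.
   Context: $\mathcal{P}_{2,\mathrm{ac}}(\mathbb{R})$: probability measures on $\mathbb{R}$ with finite second moment and Lebesgue density; $\mathbf{t}_{\mu\to\nu}$: quadratic-cost optimal transport map. The model is DWS at $\theta$ if there is $\Phi_\theta:\mathbb{R}\to\mathbb{R}^{1\times p}$ (transport linearization) with $\int|\mathbf{t}_{P_\theta\to P_{\theta+th}}(x)-x-t\Phi_\theta(x)h|^2\,\mathrm{d}P_\theta(x)=o(t^2)$ as $t\to0$ for every $h\in\mathbb{R}^p$, and then $J(\theta)=\mathbb{E}_\theta[\Phi_\theta(X)^\top\Phi_\theta(X)]\in\mathbb{R}^{p\times p}$. *)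

theory Defs
  imports "HOL-Analysis.Analysis" "HOL-Probability.Probability"
begin

definition P2ac :: "real measure \<Rightarrow> bool" where
  "P2ac \<mu> \<longleftrightarrow> prob_space \<mu> \<and> sets \<mu> = sets borel \<and>
     (\<exists>f :: real \<Rightarrow> ennreal. f \<in> borel_measurable borel \<and> \<mu> = density lborel f) \<and>
     integrable \<mu> (\<lambda>x. x\<^sup>2)"

definition is_ot_map :: "real measure \<Rightarrow> real measure \<Rightarrow> (real \<Rightarrow> real) \<Rightarrow> bool" where
  "is_ot_map \<mu> \<nu> T \<longleftrightarrow> T \<in> borel_measurable \<mu> \<and> distr \<mu> borel T = \<nu> \<and>
     (\<forall>S. S \<in> borel_measurable \<mu> \<longrightarrow> distr \<mu> borel S = \<nu> \<longrightarrow>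
        (\<integral>\<^sup>+x. ennreal ((T x - x)\<^sup>2) \<partial>\<mu>) \<le> (\<integral>\<^sup>+x. ennreal ((S x - x)\<^sup>2) \<partial>\<mu>))"

definition transport_linearization ::
  "('p::finite) itself \<Rightarrow> (real^'p) set \<Rightarrow> (real^'p \<Rightarrow> real measure) \<Rightarrow> real^'p \<Rightarrow> (real \<Rightarrow> real^'p) \<Rightarrow> bool" where
  "transport_linearization _ \<Theta> P \<theta> \<Phi> \<longleftrightarrow> \<Phi> \<in> borel_measurable borel \<and>
     (\<forall>h::real^'p. \<forall>T::real \<Rightarrow> real \<Rightarrow> real.
        (\<forall>t. \<theta> + t *\<^sub>R h \<in> \<Theta> \<longrightarrow> is_ot_map (P \<theta>) (P (\<theta> + t *\<^sub>R h)) (T t)) \<longrightarrow>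
        (\<forall>\<epsilon>>0. eventually (\<lambda>t. (\<integral>\<^sup>+x. ennreal ((T t x - x - t * (\<Phi> x \<bullet> h))\<^sup>2) \<partial>P \<theta>)
                                  \<le> ennreal (\<epsilon> * t\<^sup>2)) (at 0)))"

definition DWS :: "(real^'p::finite) set \<Rightarrow> (real^'p \<Rightarrow> real measure) \<Rightarrow> real^'p \<Rightarrow> bool" where
  "DWS \<Theta> P \<theta> \<longleftrightarrow> (\<exists>\<Phi>. transport_linearization TYPE('p) \<Theta> P \<theta> \<Phi>)"

definition wass_info :: "real measure \<Rightarrow> (real \<Rightarrow> real^'p::finite) \<Rightarrow> real^'p^'p" where
  "wass_info \<mu> \<Phi> = (\<chi> i j. \<integral>x. \<Phi> x $ i * \<Phi> x $ j \<partial>\<mu>)"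

definition quantile :: "real measure \<Rightarrow> real \<Rightarrow> real" where
  "quantile \<mu> u = Inf {x. u \<le> cdf \<mu> x}"

definition quantile_gradient ::
  "(real^'p::finite \<Rightarrow> real measure) \<Rightarrow> real^'p \<Rightarrow> (real \<Rightarrow> real^'p) \<Rightarrow> bool" where
  "quantile_gradient P \<theta> G \<longleftrightarrow> G \<in> borel_measurable borel \<and>
     (\<integral>\<^sup>+u\<in>{0..1}. ennreal ((norm (G u))\<^sup>2) \<partial>lborel) < \<infinity> \<and>
     (\<forall>h::real^'p. \<forall>\<epsilon>>0. eventually (\<lambda>t.
        (\<integral>\<^sup>+u\<in>{0<..<1}. ennreal ((quantile (P (\<theta> + t *\<^sub>R h)) u - quantile (P \<theta>) u - t * (G u \<bullet> h))\<^sup>2) \<partial>lborel)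
          \<le> ennreal (\<epsilon> * t\<^sup>2)) (at 0))"

end

theory Submission
  imports Defs
begin



definition U :: "real measure" where "U = restrict_space lborel {0<..<1}"

lemma P2ac_real_distribution: "P2ac \<mu> \<Longrightarrow> real_distribution \<mu>"
  unfolding P2ac_def real_distribution_def real_distribution_axioms_def by auto

lemma P2ac_cdf_distribution: "P2ac \<mu> \<Longrightarrow> cdf_distribution \<mu>"
  unfolding cdf_distribution_def by (rule P2ac_real_distribution)

lemma P2ac_distr_quantile: "P2ac \<mu> \<Longrightarrow> distr U borel (quantile \<mu>) = \<mu>"
  unfolding U_def quantile_def[abs_def]
  using cdf_distribution.distr_I_eq_M[OF P2ac_cdf_distribution] by blast

lemma P2ac_pseudo: "P2ac \<mu> \<Longrightarrow> 0 < u \<Longrightarrow> u < 1 \<Longrightarrow> (u \<le> cdf \<mu> x \<longleftrightarrow> quantile \<mu> u \<le> x)"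
proof -
  assume a: "P2ac \<mu>" "0 < u" "u < 1"
  interpret cdf_distribution \<mu> by (rule P2ac_cdf_distribution[OF a(1)])
  show ?thesis unfolding quantile_def using pseudoinverse \<open>0 < u\<close> \<open>u < 1\<close> by blast
qed

lemma quantile_mono: "P2ac \<mu> \<Longrightarrow> mono_on {0<..<1} (quantile \<mu>)"
proof -
  assume "P2ac \<mu>"
  then interpret cdf_distribution \<mu> by (rule P2ac_cdf_distribution)
  show ?thesis unfolding quantile_def[abs_def] using mono_I by blast
qed

lemma space_U[simp]: "space U = {0<..<1}"
  by (simp add: U_def space_restrict_space)

lemma sets_U: "sets U = sets (restrict_space borel {0<..<1})"
  unfolding U_def by (simp add: sets_restrict_space)

lemma quantile_meas_U[measurable]: "P2ac \<mu> \<Longrightarrow> quantile \<mu> \<in> borel_measurable U"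
proof -
  assume "P2ac \<mu>"
  then interpret cdf_distribution \<mu> by (rule P2ac_cdf_distribution)
  have "quantile \<mu> \<in> borel_measurable (restrict_space borel {0<..<1})"
    unfolding quantile_def[abs_def] using measurable_CI by blast
  then show ?thesis by (subst measurable_cong_sets[OF sets_U refl])
qed

lemma prob_space_U: "prob_space U"
  unfolding U_def by (auto simp add: emeasure_restrict_space space_restrict_space intro!: prob_spaceI)

lemma finite_measure_U: "finite_measure U"
  using prob_space_U unfolding prob_space_def by simp

lemma cdf_meas[measurable]: "P2ac \<mu> \<Longrightarrow> cdf \<mu> \<in> borel_measurable borel"
proof -
  assume "P2ac \<mu>"
  then interpret cdf_distribution \<mu> by (rule P2ac_cdf_distribution)
  show ?thesis by (rule measurable_C)
qed

lemma P2ac_atom: "P2ac \<mu> \<Longrightarrow> measure \<mu> {x} = 0"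
proof -
  assume "P2ac \<mu>"
  then obtain f where f: "f \<in> borel_measurable borel" "\<mu> = density lborel f" unfolding P2ac_def by blast
  have "emeasure \<mu> {x} = (\<integral>\<^sup>+ y. f y * indicator {x} y \<partial>lborel)"
    using f by (simp add: emeasure_density)
  also have "\<dots> = 0"
    by (rule nn_integral_null_set) (auto simp: null_sets_def)
  finally show ?thesis by (simp add: measure_def)
qed

lemma cdf_cont: "P2ac \<mu> \<Longrightarrow> isCont (cdf \<mu>) x"
proof -
  assume "P2ac \<mu>"
  then interpret cdf_distribution \<mu> by (rule P2ac_cdf_distribution)
  show ?thesis using isCont_cdf P2ac_atom[OF \<open>P2ac \<mu>\<close>] by blast
qed

lemma cdf_quantile: "P2ac \<mu> \<Longrightarrow> 0 < u \<Longrightarrow> u < 1 \<Longrightarrow> cdf \<mu> (quantile \<mu> u) = u"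
proof -
  assume a: "P2ac \<mu>" "0 < u" "u < 1"
  have ge: "u \<le> cdf \<mu> (quantile \<mu> u)" using P2ac_pseudo[OF a] by simp
  have lt: "cdf \<mu> x < u" if "x < quantile \<mu> u" for x using P2ac_pseudo[OF a, of x] that by auto
  have "((cdf \<mu>) \<longlongrightarrow> cdf \<mu> (quantile \<mu> u)) (at_left (quantile \<mu> u))"
    using cdf_cont[OF a(1)] by (simp add: isCont_def filterlim_at_split)
  moreover have "eventually (\<lambda>x. cdf \<mu> x \<le> u) (at_left (quantile \<mu> u))"
    unfolding eventually_at_left_field using lt
    by (intro exI[of _ "quantile \<mu> u - 1"]) (auto intro: less_imp_le)
  ultimately have "cdf \<mu> (quantile \<mu> u) \<le> u"
    by (rule tendsto_upperbound) simp
  with ge show ?thesis by simp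
qed

lemma quantile_strict: "P2ac \<mu> \<Longrightarrow> 0 < u \<Longrightarrow> u < v \<Longrightarrow> v < 1 \<Longrightarrow> quantile \<mu> u < quantile \<mu> v"
proof -
  assume a: "P2ac \<mu>" "0 < u" "u < v" "v < 1"
  have "quantile \<mu> u \<le> quantile \<mu> v" using quantile_mono[OF a(1)] a by (auto intro: mono_onD)
  moreover have "quantile \<mu> u \<noteq> quantile \<mu> v"
    using cdf_quantile[OF a(1), of u] cdf_quantile[OF a(1), of v] a by auto
  ultimately show ?thesis by simp
qed

lemma transfer_nn:
  assumes "P2ac \<mu>" "g \<in> borel_measurable borel"
  shows "(\<integral>\<^sup>+x. g x \<partial>\<mu>) = (\<integral>\<^sup>+u. g (quantile \<mu> u) \<partial>U)"
proof -
  have "(\<integral>\<^sup>+x. g x \<partial>\<mu>) = (\<integral>\<^sup>+x. g x \<partial>distr U borel (quantile \<mu>))"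
    using P2ac_distr_quantile[OF assms(1)] by simp
  also have "\<dots> = (\<integral>\<^sup>+u. g (quantile \<mu> u) \<partial>U)"
    using nn_integral_distr[OF quantile_meas_U[OF assms(1)]] assms(2) by simp
  finally show ?thesis .
qed

lemma transfer_int:
  fixes g :: "real \<Rightarrow> real"
  assumes "P2ac \<mu>" "g \<in> borel_measurable borel"
  shows "(\<integral>x. g x \<partial>\<mu>) = (\<integral>u. g (quantile \<mu> u) \<partial>U)"
    and "integrable \<mu> g \<longleftrightarrow> integrable U (\<lambda>u. g (quantile \<mu> u))"
proof -
  have "(\<integral>x. g x \<partial>\<mu>) = (\<integral>x. g x \<partial>distr U borel (quantile \<mu>))"
    using P2ac_distr_quantile[OF assms(1)] by simp
  also have "\<dots> = (\<integral>u. g (quantile \<mu> u) \<partial>U)"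
    using integral_distr[OF quantile_meas_U[OF assms(1)] assms(2)] by simp
  finally show "(\<integral>x. g x \<partial>\<mu>) = (\<integral>u. g (quantile \<mu> u) \<partial>U)" .
  have "integrable \<mu> g \<longleftrightarrow> integrable (distr U borel (quantile \<mu>)) g"
    using P2ac_distr_quantile[OF assms(1)] by simp
  also have "\<dots> \<longleftrightarrow> integrable U (\<lambda>u. g (quantile \<mu> u))"
    using integrable_distr_eq[OF quantile_meas_U[OF assms(1)] assms(2)] by simp
  finally show "integrable \<mu> g \<longleftrightarrow> integrable U (\<lambda>u. g (quantile \<mu> u))" .
qed

lemma quantile_sq_integrable: "P2ac \<mu> \<Longrightarrow> integrable U (\<lambda>u. (quantile \<mu> u)\<^sup>2)"
  using transfer_int(2)[of \<mu> "\<lambda>x. x\<^sup>2"] unfolding P2ac_def by auto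

lemma abs_le_sq1: "\<bar>x::real\<bar> \<le> x\<^sup>2 + 1"
proof (cases "\<bar>x\<bar> \<le> 1")
  case True then show ?thesis by (smt (verit) zero_le_power2)
next
  case False
  then have "\<bar>x\<bar> * 1 \<le> \<bar>x\<bar> * \<bar>x\<bar>" by (intro mult_left_mono) auto
  then show ?thesis by (simp add: power2_eq_square)
qed

lemma quantile_integrable: "P2ac \<mu> \<Longrightarrow> integrable U (quantile \<mu>)"
proof -
  assume a: "P2ac \<mu>"
  show ?thesis
  proof (rule Bochner_Integration.integrable_bound[where f="\<lambda>u. (quantile \<mu> u)\<^sup>2 + 1"])
    show "integrable U (\<lambda>u. (quantile \<mu> u)\<^sup>2 + 1)"
      by (rule Bochner_Integration.integrable_add[OF quantile_sq_integrable[OF a] finite_measure.integrable_const[OF finite_measure_U]])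
    show "quantile \<mu> \<in> borel_measurable U" using a by simp
    show "AE x in U. norm (quantile \<mu> x) \<le> norm ((quantile \<mu> x)\<^sup>2 + 1)"
    proof (intro AE_I2)
      fix x have "\<bar>quantile \<mu> x\<bar> \<le> (quantile \<mu> x)\<^sup>2 + 1"
        by (rule abs_le_sq1)
      then show "norm (quantile \<mu> x) \<le> norm ((quantile \<mu> x)\<^sup>2 + 1)" by simp
    qed
  qed
qed

lemma quantile_sq_nn_finite: "P2ac \<mu> \<Longrightarrow> (\<integral>\<^sup>+u. ennreal ((quantile \<mu> u)\<^sup>2) \<partial>U) < \<infinity>"
proof -
  assume a: "P2ac \<mu>"
  have "(\<integral>\<^sup>+u. ennreal ((quantile \<mu> u)\<^sup>2) \<partial>U) = ennreal (\<integral>u. (quantile \<mu> u)\<^sup>2 \<partial>U)"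
    by (rule nn_integral_eq_integral) (use quantile_sq_integrable[OF a] in auto)
  then show ?thesis by simp
qed

definition Qm :: "real measure \<Rightarrow> real \<Rightarrow> real" where
  "Qm \<mu> u = (if u \<in> {0<..<1} then quantile \<mu> u else 0)"

lemma Qm_meas: "P2ac \<mu> \<Longrightarrow> Qm \<mu> \<in> borel_measurable borel"
  unfolding Qm_def[abs_def]
proof (subst measurable_If_restrict_space_iff)
  assume a: "P2ac \<mu>"
  show "{x \<in> space borel. x \<in> {0<..<1::real}} \<in> sets borel" by simp
  have e: "{x::real. x \<in> {0<..<1}} = {0<..<1}" by auto
  show "quantile \<mu> \<in> borel_measurable (restrict_space borel {x. x \<in> {0<..<1}}) \<and>
    (\<lambda>x. 0) \<in> borel_measurable (restrict_space borel {x. x \<notin> {0<..<1}})"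
    unfolding e using borel_measurable_mono_on_fnc[OF quantile_mono[OF a]] by simp
qed

definition T0 :: "real measure \<Rightarrow> real measure \<Rightarrow> real \<Rightarrow> real" where
  "T0 \<mu> \<nu> x = Qm \<nu> (cdf \<mu> x)"

lemma T0_meas: "P2ac \<mu> \<Longrightarrow> P2ac \<nu> \<Longrightarrow> T0 \<mu> \<nu> \<in> borel_measurable borel"
  unfolding T0_def[abs_def] using measurable_comp[OF cdf_meas Qm_meas] by (simp add: comp_def)

lemma T0_quantile: "P2ac \<mu> \<Longrightarrow> u \<in> {0<..<1} \<Longrightarrow> T0 \<mu> \<nu> (quantile \<mu> u) = quantile \<nu> u"
  unfolding T0_def Qm_def using cdf_quantile by auto

lemma distr_T0: "P2ac \<mu> \<Longrightarrow> P2ac \<nu> \<Longrightarrow> distr \<mu> borel (T0 \<mu> \<nu>) = \<nu>"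
proof -
  assume a: "P2ac \<mu>" "P2ac \<nu>"
  have "distr \<mu> borel (T0 \<mu> \<nu>) = distr (distr U borel (quantile \<mu>)) borel (T0 \<mu> \<nu>)"
    using P2ac_distr_quantile[OF a(1)] by simp
  also have "\<dots> = distr U borel (T0 \<mu> \<nu> \<circ> quantile \<mu>)"
    using distr_distr[OF T0_meas[OF a] quantile_meas_U[OF a(1)]] by simp
  also have "\<dots> = distr U borel (quantile \<nu>)"
    by (rule distr_cong) (use a T0_quantile in simp_all)
  also have "\<dots> = \<nu>" by (rule P2ac_distr_quantile[OF a(2)])
  finally show ?thesis .
qed




lemma integral_rev_zero: "(c::real) \<le> d \<Longrightarrow> integral {d..c} (f::real\<Rightarrow>real) = 0"
  by (cases "c < d") auto

locale core =
  fixes \<mu> \<nu> :: "real measure"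
  assumes Pm: "P2ac \<mu>" and Pn: "P2ac \<nu>"
begin

abbreviation "a \<equiv> quantile \<mu>"
abbreviation "b \<equiv> quantile \<nu>"
abbreviation "G \<equiv> cdf \<nu>"

definition f where "f s = a (G s)"
definition Iset where "Iset = {y. 0 < G y \<and> G y < 1}"
definition y0 where "y0 = b (1/2)"
definition psi where "psi y = integral {y0..y} f - integral {y..y0} f"

lemma G_mono: "x \<le> y \<Longrightarrow> G x \<le> G y"
proof -
  assume "x \<le> y"
  interpret real_distribution \<nu> by (rule P2ac_real_distribution[OF Pn])
  show ?thesis using cdf_nondecreasing \<open>x \<le> y\<close> by blast
qed

lemma Iset_between: "y \<in> Iset \<Longrightarrow> y' \<in> Iset \<Longrightarrow> y \<le> s \<Longrightarrow> s \<le> y' \<Longrightarrow> s \<in> Iset"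
  unfolding Iset_def using G_mono[of y s] G_mono[of s y'] by auto

lemma b_in: "0 < u \<Longrightarrow> u < 1 \<Longrightarrow> b u \<in> Iset"
  unfolding Iset_def using cdf_quantile[OF Pn] by auto

lemma y0_in: "y0 \<in> Iset"
  unfolding y0_def by (rule b_in) auto

lemma f_mono: "y \<in> Iset \<Longrightarrow> y' \<in> Iset \<Longrightarrow> y \<le> s \<Longrightarrow> s \<le> t \<Longrightarrow> t \<le> y' \<Longrightarrow> f s \<le> f t"
proof -
  assume h: "y \<in> Iset" "y' \<in> Iset" "y \<le> s" "s \<le> t" "t \<le> y'"
  have "s \<in> Iset" "t \<in> Iset" using Iset_between h by (meson order_trans)+
  then show ?thesis unfolding f_def Iset_def
    using mono_onD[OF quantile_mono[OF Pm], of "G s" "G t"] G_mono[OF h(4)] by auto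
qed

lemma f_int: "y \<in> Iset \<Longrightarrow> y' \<in> Iset \<Longrightarrow> f integrable_on {y..y'}"
proof -
  assume h: "y \<in> Iset" "y' \<in> Iset"
  have "mono_on {y..y'} f" by (rule mono_onI) (use f_mono[OF h] in auto)
  then show ?thesis by (rule integrable_on_mono_on)
qed

lemma psi_diff:
  assumes "y \<in> Iset" "y' \<in> Iset" "y \<le> y'"
  shows "psi y' - psi y = integral {y..y'} f"
proof -
  note yi = y0_in
  consider "y0 \<le> y" | "y \<le> y0" "y0 \<le> y'" | "y' \<le> y0" using assms(3) by linarith
  then show ?thesis
  proof cases
    case 1
    have "integral {y0..y} f + integral {y..y'} f = integral {y0..y'} f"
      by (rule Henstock_Kurzweil_Integration.integral_combine) (use 1 assms f_int[OF yi assms(2)] in auto)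
    then show ?thesis unfolding psi_def using integral_rev_zero[OF 1, of f]
      integral_rev_zero[of y0 y' f] 1 assms(3) by auto
  next
    case 2
    have "integral {y..y0} f + integral {y0..y'} f = integral {y..y'} f"
      by (rule Henstock_Kurzweil_Integration.integral_combine) (use 2 assms f_int[OF assms(1) assms(2)] in auto)
    then show ?thesis unfolding psi_def using integral_rev_zero[OF 2(1), of f]
      integral_rev_zero[OF 2(2), of f] by auto
  next
    case 3
    have "integral {y..y'} f + integral {y'..y0} f = integral {y..y0} f"
      by (rule Henstock_Kurzweil_Integration.integral_combine) (use 3 assms f_int[OF assms(1) yi] in auto)
    then show ?thesis unfolding psi_def using integral_rev_zero[OF 3, of f]
      integral_rev_zero[of y y0 f] 3 assms(3) by auto
  qed
qed

lemma int_lower: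
  assumes "c \<in> Iset" "d \<in> Iset" "c \<le> d" "\<And>s. c \<le> s \<Longrightarrow> s \<le> d \<Longrightarrow> L \<le> f s"
  shows "(d - c) * L \<le> integral {c..d} f"
proof -
  have "integral {c..d} (\<lambda>s. L) \<le> integral {c..d} f"
    by (rule integral_le) (use assms f_int[OF assms(1,2)] in auto)
  then show ?thesis using assms(3) by simp
qed

lemma int_upper:
  assumes "c \<in> Iset" "d \<in> Iset" "c \<le> d" "\<And>s. c \<le> s \<Longrightarrow> s \<le> d \<Longrightarrow> f s \<le> L"
  shows "integral {c..d} f \<le> (d - c) * L"
proof -
  have "integral {c..d} f \<le> integral {c..d} (\<lambda>s. L)"
    by (rule integral_le) (use assms f_int[OF assms(1,2)] in auto)
  then show ?thesis using assms(3) by simp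
qed

lemma Gb: "0 < u \<Longrightarrow> u < 1 \<Longrightarrow> G (b u) = u"
  using cdf_quantile[OF Pn] by auto

lemma psi_sub:
  assumes u: "0 < u" "u < 1" and y: "y \<in> Iset"
  shows "(y - b u) * a u \<le> psi y - psi (b u)"
proof (cases "b u \<le> y")
  case True
  have "(y - b u) * a u \<le> integral {b u..y} f"
  proof (rule int_lower[OF b_in[OF u] y True])
    fix s assume s: "b u \<le> s" "s \<le> y"
    have "s \<in> Iset" using Iset_between[OF b_in[OF u] y s] .
    moreover have "u \<le> G s" using G_mono[OF s(1)] Gb[OF u] by simp
    ultimately show "a u \<le> f s" unfolding f_def Iset_def
      using mono_onD[OF quantile_mono[OF Pm], of u "G s"] u by auto
  qed
  then show ?thesis using psi_diff[OF b_in[OF u] y True] by simp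
next
  case False
  then have F: "y \<le> b u" by simp
  have "integral {y..b u} f \<le> (b u - y) * a u"
  proof (rule int_upper[OF y b_in[OF u] F])
    fix s assume s: "y \<le> s" "s \<le> b u"
    have "s \<in> Iset" using Iset_between[OF y b_in[OF u] s] .
    moreover have "G s \<le> u" using G_mono[OF s(2)] Gb[OF u] by simp
    ultimately show "f s \<le> a u" unfolding f_def Iset_def
      using mono_onD[OF quantile_mono[OF Pm], of "G s" u] u by auto
  qed
  then show ?thesis using psi_diff[OF y b_in[OF u] F] by (simp add: algebra_simps)
qed

lemma psi_strict:
  assumes u: "0 < u" "u < 1" and y: "y \<in> Iset" and ne: "y \<noteq> b u"
    and nf: "\<forall>s>b u. G s \<noteq> u"
  shows "(y - b u) * a u < psi y - psi (b u)"
proof (cases "b u < y")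
  case True
  define m where "m = (b u + y) / 2"
  have m: "b u \<le> m" "m \<le> y" "b u < m" "m < y" using True unfolding m_def by auto
  have mI: "m \<in> Iset" using Iset_between[OF b_in[OF u] y m(1,2)] .
  have low1: "(m - b u) * a u \<le> integral {b u..m} f"
  proof (rule int_lower[OF b_in[OF u] mI m(1)])
    fix s assume s: "b u \<le> s" "s \<le> m"
    have "s \<in> Iset" using Iset_between[OF b_in[OF u] mI s] .
    moreover have "u \<le> G s" using G_mono[OF s(1)] Gb[OF u] by simp
    ultimately show "a u \<le> f s" unfolding f_def Iset_def
      using mono_onD[OF quantile_mono[OF Pm], of u "G s"] u by auto
  qed
  have low2: "(y - m) * f m \<le> integral {m..y} f"
    by (rule int_lower[OF mI y m(2)]) (use f_mono[OF mI y] in auto)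
  have "u \<le> G m" using G_mono[OF m(1)] Gb[OF u] by simp
  moreover have "G m \<noteq> u" using nf m(3) by auto
  ultimately have "u < G m" by simp
  then have "a u < f m" unfolding f_def using quantile_strict[OF Pm u(1), of "G m"] mI
    unfolding Iset_def by auto
  then have "(y - m) * a u < (y - m) * f m" using m(4) by simp
  moreover have "integral {b u..m} f + integral {m..y} f = integral {b u..y} f"
    by (rule Henstock_Kurzweil_Integration.integral_combine) (use m f_int[OF b_in[OF u] y] in auto)
  ultimately have "(y - b u) * a u < integral {b u..y} f"
    using low1 low2 by (simp add: algebra_simps)
  then show ?thesis using psi_diff[OF b_in[OF u] y] True by simp
next
  case False
  then have F: "y < b u" using ne by simp
  define m where "m = (y + b u) / 2"
  have m: "y \<le> m" "m \<le> b u" "y < m" "m < b u" using F unfolding m_def by auto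
  have mI: "m \<in> Iset" using Iset_between[OF y b_in[OF u] m(1,2)] .
  have up2: "integral {m..b u} f \<le> (b u - m) * a u"
  proof (rule int_upper[OF mI b_in[OF u] m(2)])
    fix s assume s: "m \<le> s" "s \<le> b u"
    have "s \<in> Iset" using Iset_between[OF mI b_in[OF u] s] .
    moreover have "G s \<le> u" using G_mono[OF s(2)] Gb[OF u] by simp
    ultimately show "f s \<le> a u" unfolding f_def Iset_def
      using mono_onD[OF quantile_mono[OF Pm], of "G s" u] u by auto
  qed
  have up1: "integral {y..m} f \<le> (m - y) * f m"
    by (rule int_upper[OF y mI m(1)]) (use f_mono[OF y mI] in auto)
  have "G m < u" using P2ac_pseudo[OF Pn u, of m] m(4) by auto
  then have "f m < a u" unfolding f_def using quantile_strict[OF Pm _ _ u(2), of "G m"] mI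
    unfolding Iset_def by auto
  then have "(m - y) * f m < (m - y) * a u" using m(3) by simp
  moreover have "integral {y..m} f + integral {m..b u} f = integral {y..b u} f"
    by (rule Henstock_Kurzweil_Integration.integral_combine) (use m f_int[OF y b_in[OF u]] in auto)
  ultimately have "integral {y..b u} f < (b u - y) * a u"
    using up1 up2 by (simp add: algebra_simps)
  then show ?thesis using psi_diff[OF y b_in[OF u]] F by (simp add: algebra_simps)
qed

lemma Iset_open: "open Iset"
proof -
  have "Iset = G -` {0<..<1}" unfolding Iset_def by auto
  then show ?thesis using continuous_open_vimage[of "{0<..<1}" G] cdf_cont[OF Pn]
    by (simp add: isCont_def continuous_at)
qed

lemma psi_cont: "continuous_on Iset psi"
proof (rule continuous_at_imp_continuous_on, intro ballI)
  fix y assume y: "y \<in> Iset"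
  obtain e where e: "e > 0" "ball y e \<subseteq> Iset" using Iset_open y open_contains_ball by blast
  define c where "c = y - e/2"
  define d where "d = y + e/2"
  have cI: "c \<in> Iset" and dI: "d \<in> Iset" using e unfolding c_def d_def
    by (auto simp: subset_eq dist_real_def)
  have cd: "c \<le> d" using e unfolding c_def d_def by simp
  have "continuous_on {c..d} (\<lambda>z. psi c + integral {c..z} f)"
    by (intro continuous_intros indefinite_integral_continuous_1 f_int[OF cI dI])
  then have "continuous_on {c..d} psi"
  proof (rule continuous_on_cong[THEN iffD1, rotated -1])
    fix z assume z: "z \<in> {c..d}"
    then have "z \<in> Iset" using Iset_between[OF cI dI] by auto
    then have "psi z - psi c = integral {c..z} f" using psi_diff[OF cI, of z] z by auto
    then show "psi c + integral {c..z} f = psi z" by simp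
  qed simp
  moreover have "y \<in> interior {c..d}" using e unfolding c_def d_def by simp
  ultimately show "isCont psi y" using continuous_on_interior by blast
qed

definition psi' where "psi' y = indicator Iset y *\<^sub>R psi y"

lemma psi'_meas[measurable]: "psi' \<in> borel_measurable borel"
  unfolding psi'_def[abs_def]
  by (rule borel_measurable_continuous_on_indicator) (use Iset_open psi_cont in auto)

lemma psi_y0: "psi y0 = 0" unfolding psi_def by simp

lemma psi_b_bound:
  assumes u: "0 < u" "u < 1"
  shows "\<bar>psi (b u)\<bar> \<le> \<bar>b u - y0\<bar> * \<bar>a (1/2)\<bar> + \<bar>b u - y0\<bar> * \<bar>a u\<bar>"
proof -
  have 1: "(b u - y0) * a (1/2) \<le> psi (b u)"
    using psi_sub[of "1/2" "b u"] b_in[OF u] psi_y0 unfolding y0_def by simp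
  have 2: "psi (b u) \<le> (b u - y0) * a u"
    using psi_sub[OF u y0_in] psi_y0 by (simp add: algebra_simps)
  have "\<bar>(b u - y0) * a (1/2)\<bar> = \<bar>b u - y0\<bar> * \<bar>a (1/2)\<bar>" "\<bar>(b u - y0) * a u\<bar> = \<bar>b u - y0\<bar> * \<bar>a u\<bar>"
    by (simp_all add: abs_mult)
  with 1 2 show ?thesis by linarith
qed

lemma sq_diff_le: "(x - y)\<^sup>2 \<le> 2 * x\<^sup>2 + 2 * (y::real)\<^sup>2"
proof -
  have "0 \<le> (x + y)\<^sup>2" by simp
  then show ?thesis by (simp add: power2_eq_square algebra_simps)
qed

lemma abs_mult_le_sq: "\<bar>x\<bar> * \<bar>y\<bar> \<le> x\<^sup>2 + (y::real)\<^sup>2"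
proof -
  have "0 \<le> (\<bar>x\<bar> - \<bar>y\<bar>)\<^sup>2" by simp
  then have "2 * (\<bar>x\<bar> * \<bar>y\<bar>) \<le> x\<^sup>2 + y\<^sup>2" by (simp add: power2_eq_square algebra_simps)
  moreover have "0 \<le> \<bar>x\<bar> * \<bar>y\<bar>" by simp
  ultimately show ?thesis by linarith
qed

lemma psi'_b_integrable: "integrable U (\<lambda>u. psi' (b u))"
proof (rule Bochner_Integration.integrable_bound)
  define c where "c = \<bar>a (1/2)\<bar>"
  show "integrable U (\<lambda>u. c * (2 * (b u)\<^sup>2 + 2 * y0\<^sup>2 + 1) + (2 * (b u)\<^sup>2 + 2 * y0\<^sup>2) + (a u)\<^sup>2)"
    using quantile_sq_integrable[OF Pn] quantile_sq_integrable[OF Pm]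
      finite_measure.integrable_const[OF finite_measure_U]
    by (intro Bochner_Integration.integrable_add Bochner_Integration.integrable_mult_right) auto
  show "(\<lambda>u. psi' (b u)) \<in> borel_measurable U"
    using measurable_compose[OF quantile_meas_U[OF Pn] psi'_meas] .
  show "AE u in U. norm (psi' (b u)) \<le> norm (c * (2 * (b u)\<^sup>2 + 2 * y0\<^sup>2 + 1) + (2 * (b u)\<^sup>2 + 2 * y0\<^sup>2) + (a u)\<^sup>2)"
  proof (rule AE_I2)
    fix u assume "u \<in> space U"
    then have u: "0 < u" "u < 1" by auto
    have e: "psi' (b u) = psi (b u)" unfolding psi'_def using b_in[OF u] by simp
    have c0: "0 \<le> c" unfolding c_def by simp
    have "\<bar>b u - y0\<bar> \<le> (b u - y0)\<^sup>2 + 1" by (rule abs_le_sq1)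
    also have "\<dots> \<le> 2 * (b u)\<^sup>2 + 2 * y0\<^sup>2 + 1" using sq_diff_le[of "b u" y0] by simp
    finally have t1: "\<bar>b u - y0\<bar> * c \<le> c * (2 * (b u)\<^sup>2 + 2 * y0\<^sup>2 + 1)"
      using c0 by (simp add: mult_left_mono mult.commute)
    have t2: "\<bar>b u - y0\<bar> * \<bar>a u\<bar> \<le> (2 * (b u)\<^sup>2 + 2 * y0\<^sup>2) + (a u)\<^sup>2"
      using abs_mult_le_sq[of "b u - y0" "a u"] sq_diff_le[of "b u" y0] by linarith
    have "\<bar>psi (b u)\<bar> \<le> c * (2 * (b u)\<^sup>2 + 2 * y0\<^sup>2 + 1) + (2 * (b u)\<^sup>2 + 2 * y0\<^sup>2) + (a u)\<^sup>2"
      using psi_b_bound[OF u] t1 t2 unfolding c_def by linarith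
    moreover have "0 \<le> c * (2 * (b u)\<^sup>2 + 2 * y0\<^sup>2 + 1) + (2 * (b u)\<^sup>2 + 2 * y0\<^sup>2) + (a u)\<^sup>2"
      using c0 by simp
    ultimately show "norm (psi' (b u)) \<le> norm (c * (2 * (b u)\<^sup>2 + 2 * y0\<^sup>2 + 1) + (2 * (b u)\<^sup>2 + 2 * y0\<^sup>2) + (a u)\<^sup>2)"
      using e by simp
  qed
qed

lemma AE_U_ne: "AE u in U. u \<noteq> c"
  unfolding U_def by (subst AE_restrict_space_iff) (auto intro: AE_mp[OF AE_lborel_singleton[of c]])

lemma AE_noflat: "AE u in U. \<forall>s>b u. G s \<noteq> u"
proof -
  have "AE u in U. \<forall>q::rat. u \<noteq> G (of_rat q)"
    by (subst AE_all_countable) (auto intro: AE_U_ne)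
  then show ?thesis
  proof (rule AE_mp, intro AE_I2 impI allI)
    fix u s assume uU: "u \<in> space U" and nq: "\<forall>q::rat. u \<noteq> G (of_rat q)" and s: "b u < s"
    then have u: "0 < u" "u < 1" by auto
    show "G s \<noteq> u"
    proof
      assume Gs: "G s = u"
      obtain r where r: "r \<in> \<rat>" "b u < r" "r < s" using Rats_dense_in_real[OF s] by blast
      have "u \<le> G r" using G_mono[of "b u" r] r Gb[OF u] by simp
      moreover have "G r \<le> u" using G_mono[of r s] r Gs by simp
      ultimately have "G r = u" by simp
      moreover obtain q where "r = of_rat q" using r(1) Rats_cases by blast
      ultimately show False using nq by auto
    qed
  qed
qed

definition k where "k y = y\<^sup>2 - 2 * psi' y"

lemma k_meas[measurable]: "k \<in> borel_measurable borel"
  unfolding k_def[abs_def] by measurable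

lemma k_b_integrable: "integrable U (\<lambda>u. k (b u))"
  unfolding k_def using quantile_sq_integrable[OF Pn] psi'_b_integrable by auto

lemma k_nu_integrable: "integrable \<nu> k"
  using transfer_int(2)[OF Pn k_meas] k_b_integrable by simp

context
  fixes R assumes R: "R \<in> borel_measurable U" and distR: "distr U borel R = \<nu>"
begin

lemma k_R_integrable: "integrable U (\<lambda>u. k (R u))"
  using integrable_distr_eq[OF R k_meas] k_nu_integrable distR by simp

lemma k_R_integral: "(\<integral>u. k (R u) \<partial>U) = (\<integral>u. k (b u) \<partial>U)"
  using integral_distr[OF R k_meas] transfer_int(1)[OF Pn k_meas] distR by simp

lemma AE_R_I: "AE u in U. R u \<in> Iset"
proof -
  have Is: "Iset \<in> sets borel" using Iset_open by simp
  have "AE y in distr U borel b. y \<in> Iset"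
    by (subst AE_distr_iff) (use quantile_meas_U[OF Pn] Is b_in in auto)
  then have "AE y in \<nu>. y \<in> Iset" using P2ac_distr_quantile[OF Pn] by metis
  then have "AE y in distr U borel R. y \<in> Iset" using distR by metis
  then show ?thesis by (subst (asm) AE_distr_iff) (use R Is in auto)
qed

definition D where "D u = (R u - a u)\<^sup>2 - (b u - a u)\<^sup>2 - (k (R u) - k (b u))"

lemma D_nonneg: "AE u in U. 0 \<le> D u"
  using AE_R_I
proof (rule AE_mp, intro AE_I2 impI)
  fix u assume "u \<in> space U" and RI: "R u \<in> Iset"
  then have u: "0 < u" "u < 1" by auto
  have "D u = 2 * ((psi (R u) - psi (b u)) - (R u - b u) * a u)"
    unfolding D_def k_def psi'_def using RI b_in[OF u] by (simp add: power2_eq_square algebra_simps)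
  then show "0 \<le> D u" using psi_sub[OF u RI] by simp
qed

lemma D_pos: "AE u in U. R u \<noteq> b u \<longrightarrow> 0 < D u"
  using AE_R_I AE_noflat AE_space
proof (eventually_elim)
  case (elim u)
  show ?case
  proof
    assume ne: "R u \<noteq> b u"
    from elim have RI: "R u \<in> Iset" and nf: "\<forall>s>b u. G s \<noteq> u" by auto
    have u: "0 < u" "u < 1" using elim by auto
    have "D u = 2 * ((psi (R u) - psi (b u)) - (R u - b u) * a u)"
      unfolding D_def k_def psi'_def using RI b_in[OF u] by (simp add: power2_eq_square algebra_simps)
    then show "0 < D u" using psi_strict[OF u RI ne nf] by simp
  qed
qed

lemma ba_integrable: "integrable U (\<lambda>u. (b u - a u)\<^sup>2)"
proof (rule Bochner_Integration.integrable_bound)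
  show "integrable U (\<lambda>u. 2 * (b u)\<^sup>2 + 2 * (a u)\<^sup>2)"
    using quantile_sq_integrable[OF Pn] quantile_sq_integrable[OF Pm] by auto
  show "(\<lambda>u. (b u - a u)\<^sup>2) \<in> borel_measurable U" using quantile_meas_U[OF Pn] quantile_meas_U[OF Pm] by measurable
  show "AE u in U. norm ((b u - a u)\<^sup>2) \<le> norm (2 * (b u)\<^sup>2 + 2 * (a u)\<^sup>2)"
    using sq_diff_le by (intro AE_I2) simp
qed

lemma core_main:
  assumes fin: "(\<integral>\<^sup>+u. ennreal ((R u - a u)\<^sup>2) \<partial>U) < \<infinity>"
  shows "(\<integral>u. (b u - a u)\<^sup>2 \<partial>U) \<le> (\<integral>u. (R u - a u)\<^sup>2 \<partial>U)"
    and "(\<integral>u. (b u - a u)\<^sup>2 \<partial>U) = (\<integral>u. (R u - a u)\<^sup>2 \<partial>U) \<Longrightarrow> AE u in U. R u = b u"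
    and "integrable U (\<lambda>u. (R u - a u)\<^sup>2)"
proof -
  have mR: "(\<lambda>u. (R u - a u)\<^sup>2) \<in> borel_measurable U" using R quantile_meas_U[OF Pm] by measurable
  show iRa: "integrable U (\<lambda>u. (R u - a u)\<^sup>2)"
    by (rule integrableI_nonneg[OF mR AE_I2[OF zero_le_power2] fin])
  have iD: "integrable U D" unfolding D_def[abs_def]
    using iRa ba_integrable k_R_integrable k_b_integrable by auto
  have intD: "(\<integral>u. D u \<partial>U) = (\<integral>u. (R u - a u)\<^sup>2 \<partial>U) - (\<integral>u. (b u - a u)\<^sup>2 \<partial>U)"
    unfolding D_def[abs_def] using iRa ba_integrable k_R_integrable k_b_integrable k_R_integral
    by simp
  have "0 \<le> (\<integral>u. D u \<partial>U)" by (rule integral_nonneg_AE[OF D_nonneg])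
  then show "(\<integral>u. (b u - a u)\<^sup>2 \<partial>U) \<le> (\<integral>u. (R u - a u)\<^sup>2 \<partial>U)" using intD by simp
  assume "(\<integral>u. (b u - a u)\<^sup>2 \<partial>U) = (\<integral>u. (R u - a u)\<^sup>2 \<partial>U)"
  then have "(\<integral>u. D u \<partial>U) = 0" using intD by simp
  then have "AE u in U. D u = 0" using integral_nonneg_eq_0_iff_AE[OF iD D_nonneg] by simp
  then show "AE u in U. R u = b u" using D_pos by eventually_elim auto
qed

lemma core_nn:
  shows "(\<integral>\<^sup>+u. ennreal ((b u - a u)\<^sup>2) \<partial>U) \<le> (\<integral>\<^sup>+u. ennreal ((R u - a u)\<^sup>2) \<partial>U)"
    and "(\<integral>\<^sup>+u. ennreal ((b u - a u)\<^sup>2) \<partial>U) = (\<integral>\<^sup>+u. ennreal ((R u - a u)\<^sup>2) \<partial>U)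
         \<Longrightarrow> AE u in U. R u = b u"
proof -
  have eb: "(\<integral>\<^sup>+u. ennreal ((b u - a u)\<^sup>2) \<partial>U) = ennreal (\<integral>u. (b u - a u)\<^sup>2 \<partial>U)"
    by (rule nn_integral_eq_integral[OF ba_integrable AE_I2[OF zero_le_power2]])
  show "(\<integral>\<^sup>+u. ennreal ((b u - a u)\<^sup>2) \<partial>U) \<le> (\<integral>\<^sup>+u. ennreal ((R u - a u)\<^sup>2) \<partial>U)"
  proof (cases "(\<integral>\<^sup>+u. ennreal ((R u - a u)\<^sup>2) \<partial>U) < \<infinity>")
    case True
    have eR: "(\<integral>\<^sup>+u. ennreal ((R u - a u)\<^sup>2) \<partial>U) = ennreal (\<integral>u. (R u - a u)\<^sup>2 \<partial>U)"
      by (rule nn_integral_eq_integral[OF core_main(3)[OF True] AE_I2[OF zero_le_power2]])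
    show ?thesis unfolding eb eR by (rule ennreal_leI[OF core_main(1)[OF True]])
  next
    case False
    then have "\<infinity> \<le> (\<integral>\<^sup>+u. ennreal ((R u - a u)\<^sup>2) \<partial>U)" unfolding not_less .
    moreover have "(\<integral>\<^sup>+u. ennreal ((b u - a u)\<^sup>2) \<partial>U) \<le> \<infinity>" by simp
    ultimately show ?thesis by (rule order_trans[rotated])
  qed
  assume eq: "(\<integral>\<^sup>+u. ennreal ((b u - a u)\<^sup>2) \<partial>U) = (\<integral>\<^sup>+u. ennreal ((R u - a u)\<^sup>2) \<partial>U)"
  then have fin: "(\<integral>\<^sup>+u. ennreal ((R u - a u)\<^sup>2) \<partial>U) < \<infinity>" proof -
    have "(\<integral>\<^sup>+u. ennreal ((R u - a u)\<^sup>2) \<partial>U) = ennreal (\<integral>u. (b u - a u)\<^sup>2 \<partial>U)"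
      using eq eb by simp
    then show ?thesis by simp
  qed
  have eR: "(\<integral>\<^sup>+u. ennreal ((R u - a u)\<^sup>2) \<partial>U) = ennreal (\<integral>u. (R u - a u)\<^sup>2 \<partial>U)"
    by (rule nn_integral_eq_integral[OF core_main(3)[OF fin] AE_I2[OF zero_le_power2]])
  have n1: "0 \<le> (\<integral>u. (b u - a u)\<^sup>2 \<partial>U)" by (rule integral_nonneg_AE) simp
  have n2: "0 \<le> (\<integral>u. (R u - a u)\<^sup>2 \<partial>U)" by (rule integral_nonneg_AE) simp
  have "(\<integral>u. (b u - a u)\<^sup>2 \<partial>U) = (\<integral>u. (R u - a u)\<^sup>2 \<partial>U)"
    using eq unfolding eb eR using ennreal_inj[OF n1 n2] by simp
  then show "AE u in U. R u = b u" by (rule core_main(2)[OF fin])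
qed

end

end



lemma meas_eq_P2ac: "P2ac \<mu> \<Longrightarrow> measurable \<mu> N = measurable borel N"
  unfolding P2ac_def by (intro measurable_cong_sets) auto

lemma meas_P2ac: "P2ac \<mu> \<Longrightarrow> S \<in> borel_measurable \<mu> \<Longrightarrow> S \<in> borel_measurable borel"
  using meas_eq_P2ac by blast

lemma meas_P2ac': "P2ac \<mu> \<Longrightarrow> S \<in> borel_measurable borel \<Longrightarrow> S \<in> borel_measurable \<mu>"
  using meas_eq_P2ac by blast

lemma cost_transfer:
  assumes "P2ac \<mu>" "S \<in> borel_measurable borel"
  shows "(\<integral>\<^sup>+x. ennreal ((S x - x)\<^sup>2) \<partial>\<mu>) = (\<integral>\<^sup>+u. ennreal ((S (quantile \<mu> u) - quantile \<mu> u)\<^sup>2) \<partial>U)"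
proof (rule transfer_nn[OF assms(1)])
  have "(\<lambda>x. (S x - x)\<^sup>2) \<in> borel_measurable borel" using assms(2) by measurable
  then show "(\<lambda>x. ennreal ((S x - x)\<^sup>2)) \<in> borel_measurable borel" by (rule measurable_compose) simp
qed

lemma distr_comp_quantile:
  assumes "P2ac \<mu>" "S \<in> borel_measurable borel"
  shows "distr U borel (\<lambda>u. S (quantile \<mu> u)) = distr \<mu> borel S"
proof -
  have "distr \<mu> borel S = distr (distr U borel (quantile \<mu>)) borel S"
    using P2ac_distr_quantile[OF assms(1)] by simp
  also have "\<dots> = distr U borel (S \<circ> quantile \<mu>)"
    using distr_distr[OF assms(2) quantile_meas_U[OF assms(1)]] by simp
  finally show ?thesis by (simp add: comp_def)
qed

lemma cost_T0:
  assumes "P2ac \<mu>" "P2ac \<nu>"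
  shows "(\<integral>\<^sup>+x. ennreal ((T0 \<mu> \<nu> x - x)\<^sup>2) \<partial>\<mu>) = (\<integral>\<^sup>+u. ennreal ((quantile \<nu> u - quantile \<mu> u)\<^sup>2) \<partial>U)"
  unfolding cost_transfer[OF assms(1) T0_meas[OF assms]]
  by (rule nn_integral_cong) (use T0_quantile[OF assms(1)] in simp)

lemma OT_T0:
  assumes Pm: "P2ac \<mu>" and Pn: "P2ac \<nu>"
  shows "is_ot_map \<mu> \<nu> (T0 \<mu> \<nu>)"
  unfolding is_ot_map_def
proof (intro conjI allI impI)
  show "T0 \<mu> \<nu> \<in> borel_measurable \<mu>" by (rule meas_P2ac'[OF Pm T0_meas[OF Pm Pn]])
  show "distr \<mu> borel (T0 \<mu> \<nu>) = \<nu>" by (rule distr_T0[OF Pm Pn])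
  fix S assume S: "S \<in> borel_measurable \<mu>" "distr \<mu> borel S = \<nu>"
  have Sb: "S \<in> borel_measurable borel" by (rule meas_P2ac[OF Pm S(1)])
  interpret core \<mu> \<nu> by unfold_locales (fact Pm, fact Pn)
  have R: "(\<lambda>u. S (quantile \<mu> u)) \<in> borel_measurable U"
    using measurable_compose[OF quantile_meas_U[OF Pm] Sb] .
  have dR: "distr U borel (\<lambda>u. S (quantile \<mu> u)) = \<nu>"
    using distr_comp_quantile[OF Pm Sb] S(2) by simp
  show "(\<integral>\<^sup>+x. ennreal ((T0 \<mu> \<nu> x - x)\<^sup>2) \<partial>\<mu>) \<le> (\<integral>\<^sup>+x. ennreal ((S x - x)\<^sup>2) \<partial>\<mu>)"
    unfolding cost_T0[OF Pm Pn] cost_transfer[OF Pm Sb]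
    by (rule core_nn(1)[OF R dR])
qed

lemma OT_unique:
  assumes Pm: "P2ac \<mu>" and Pn: "P2ac \<nu>" and T: "is_ot_map \<mu> \<nu> T"
  shows "AE x in \<mu>. T x = T0 \<mu> \<nu> x"
proof -
  interpret core \<mu> \<nu> by unfold_locales (fact Pm, fact Pn)
  have Tb: "T \<in> borel_measurable borel" using T meas_P2ac[OF Pm] unfolding is_ot_map_def by (elim conjE)
  have dT: "distr \<mu> borel T = \<nu>" using T unfolding is_ot_map_def by (elim conjE)
  have R: "(\<lambda>u. T (quantile \<mu> u)) \<in> borel_measurable U"
    using measurable_compose[OF quantile_meas_U[OF Pm] Tb] .
  have dR: "distr U borel (\<lambda>u. T (quantile \<mu> u)) = \<nu>"
    using distr_comp_quantile[OF Pm Tb] dT by simp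
  have opt: "\<forall>S. S \<in> borel_measurable \<mu> \<longrightarrow> distr \<mu> borel S = \<nu> \<longrightarrow>
        (\<integral>\<^sup>+x. ennreal ((T x - x)\<^sup>2) \<partial>\<mu>) \<le> (\<integral>\<^sup>+x. ennreal ((S x - x)\<^sup>2) \<partial>\<mu>)"
    using T unfolding is_ot_map_def by (elim conjE)
  have le1: "(\<integral>\<^sup>+x. ennreal ((T x - x)\<^sup>2) \<partial>\<mu>) \<le> (\<integral>\<^sup>+x. ennreal ((T0 \<mu> \<nu> x - x)\<^sup>2) \<partial>\<mu>)"
    using opt[rule_format, OF meas_P2ac'[OF Pm T0_meas[OF Pm Pn]] distr_T0[OF Pm Pn]] .
  have le2: "(\<integral>\<^sup>+x. ennreal ((T0 \<mu> \<nu> x - x)\<^sup>2) \<partial>\<mu>) \<le> (\<integral>\<^sup>+x. ennreal ((T x - x)\<^sup>2) \<partial>\<mu>)"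
    unfolding cost_T0[OF Pm Pn] cost_transfer[OF Pm Tb]
    by (rule core_nn(1)[OF R dR])
  have "(\<integral>\<^sup>+u. ennreal ((quantile \<nu> u - quantile \<mu> u)\<^sup>2) \<partial>U) = (\<integral>\<^sup>+u. ennreal ((T (quantile \<mu> u) - quantile \<mu> u)\<^sup>2) \<partial>U)"
    using le1 le2 unfolding cost_T0[OF Pm Pn] cost_transfer[OF Pm Tb] by (rule antisym[rotated])
  then have ae: "AE u in U. T (quantile \<mu> u) = quantile \<nu> u" by (rule core_nn(2)[OF R dR])
  have "AE u in U. T (quantile \<mu> u) = T0 \<mu> \<nu> (quantile \<mu> u)"
    using ae by (rule AE_mp) (auto intro!: AE_I2 simp: T0_quantile[OF Pm])
  then have "AE x in distr U borel (quantile \<mu>). T x = T0 \<mu> \<nu> x"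
  proof (subst AE_distr_iff)
    show "quantile \<mu> \<in> U \<rightarrow>\<^sub>M borel" by (rule quantile_meas_U[OF Pm])
    show "{x \<in> space borel. T x = T0 \<mu> \<nu> x} \<in> sets borel"
      using Tb T0_meas[OF Pm Pn] by measurable
  qed
  then show ?thesis unfolding P2ac_distr_quantile[OF Pm] .
qed




lemma ev_in:
  fixes \<theta> :: "'a::real_normed_vector"
  assumes "open \<Theta>" "\<theta> \<in> \<Theta>"
  shows "eventually (\<lambda>t. \<theta> + t *\<^sub>R h \<in> \<Theta>) (at (0::real))"
proof -
  have "((\<lambda>t. \<theta> + t *\<^sub>R h) \<longlongrightarrow> \<theta> + 0 *\<^sub>R h) (at (0::real))"
    by (intro tendsto_intros)
  then have "((\<lambda>t. \<theta> + t *\<^sub>R h) \<longlongrightarrow> \<theta>) (at (0::real))" by simp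
  then show ?thesis using assms topological_tendstoD by blast
qed

lemma setU: "(\<integral>\<^sup>+u. f u \<partial>U) = (\<integral>\<^sup>+u\<in>{0<..<1}. f u \<partial>lborel)"
  unfolding U_def by (rule nn_integral_restrict_space) simp

lemma endpoints_nn: "(\<integral>\<^sup>+u\<in>{0..1}. f u \<partial>lborel) = (\<integral>\<^sup>+u\<in>{0<..<1::real}. f u \<partial>lborel)"
proof (rule nn_integral_cong_AE)
  show "AE x in lborel. f x * indicator {0..1} x = f x * indicator {0<..<1} x"
    using AE_lborel_singleton[of 0] AE_lborel_singleton[of 1]
    by eventually_elim (auto simp: indicator_def)
qed

lemma endpoints_int:
  fixes g :: "real \<Rightarrow> real"
  assumes g: "g \<in> borel_measurable borel"
  shows "integral\<^sup>L (restrict_space lborel {0..1}) g = integral\<^sup>L U g"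
proof -
  have "integral\<^sup>L (restrict_space lborel {0..1}) g = (\<integral>x. indicator {0..1} x *\<^sub>R g x \<partial>lborel)"
    by (rule integral_restrict_space) simp
  also have "\<dots> = (\<integral>x. indicator {0<..<1} x *\<^sub>R g x \<partial>lborel)"
  proof (rule integral_cong_AE)
    show "(\<lambda>x. indicator {0..1} x *\<^sub>R g x) \<in> borel_measurable lborel" using g by measurable
    show "(\<lambda>x. indicator {0<..<1} x *\<^sub>R g x) \<in> borel_measurable lborel" using g by measurable
    show "AE x in lborel. indicator {0..1} x *\<^sub>R g x = indicator {0<..<1::real} x *\<^sub>R g x"
      using AE_lborel_singleton[of 0] AE_lborel_singleton[of 1]
      by eventually_elim (auto simp: indicator_def)
  qed
  also have "\<dots> = integral\<^sup>L U g"
    unfolding U_def by (rule integral_restrict_space[symmetric]) simp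
  finally show ?thesis .
qed

lemma cost_formula:
  assumes Pm: "P2ac \<mu>" and Pn: "P2ac \<nu>" and c: "c \<in> borel_measurable borel"
  shows "(\<integral>\<^sup>+x. ennreal ((T0 \<mu> \<nu> x - x - c x)\<^sup>2) \<partial>\<mu>) =
         (\<integral>\<^sup>+u\<in>{0<..<1}. ennreal ((quantile \<nu> u - quantile \<mu> u - c (quantile \<mu> u))\<^sup>2) \<partial>lborel)"
proof -
  have m: "(\<lambda>x. ennreal ((T0 \<mu> \<nu> x - x - c x)\<^sup>2)) \<in> borel_measurable borel"
    using T0_meas[OF Pm Pn] c by measurable
  have "(\<integral>\<^sup>+x. ennreal ((T0 \<mu> \<nu> x - x - c x)\<^sup>2) \<partial>\<mu>) =
        (\<integral>\<^sup>+u. ennreal ((T0 \<mu> \<nu> (quantile \<mu> u) - quantile \<mu> u - c (quantile \<mu> u))\<^sup>2) \<partial>U)"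
    by (rule transfer_nn[OF Pm m])
  also have "\<dots> = (\<integral>\<^sup>+u. ennreal ((quantile \<nu> u - quantile \<mu> u - c (quantile \<mu> u))\<^sup>2) \<partial>U)"
    by (rule nn_integral_cong) (simp add: T0_quantile[OF Pm])
  finally show ?thesis unfolding setU .
qed

lemma cost_OT:
  assumes Pm: "P2ac \<mu>" and Pn: "P2ac \<nu>" and T: "is_ot_map \<mu> \<nu> T"
  shows "(\<integral>\<^sup>+x. ennreal ((T x - x - c x)\<^sup>2) \<partial>\<mu>) = (\<integral>\<^sup>+x. ennreal ((T0 \<mu> \<nu> x - x - c x)\<^sup>2) \<partial>\<mu>)"
proof (rule nn_integral_cong_AE)
  show "AE x in \<mu>. ennreal ((T x - x - c x)\<^sup>2) = ennreal ((T0 \<mu> \<nu> x - x - c x)\<^sup>2)"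
    using OT_unique[OF Pm Pn T] by eventually_elim simp
qed

lemma sq_diff_le': "(x - y)\<^sup>2 \<le> 2 * x\<^sup>2 + 2 * (y::real)\<^sup>2"
proof -
  have "0 \<le> (x + y)\<^sup>2" by simp
  then show ?thesis by (simp add: power2_eq_square algebra_simps)
qed

lemma nn_sq_diff:
  assumes "f \<in> borel_measurable M" "g \<in> borel_measurable M"
  shows "(\<integral>\<^sup>+x. ennreal ((f x - g x)\<^sup>2) \<partial>M) \<le> 2 * (\<integral>\<^sup>+x. ennreal ((f x)\<^sup>2) \<partial>M) + 2 * (\<integral>\<^sup>+x. ennreal ((g x)\<^sup>2) \<partial>M)"
proof -
  have "(\<integral>\<^sup>+x. ennreal ((f x - g x)\<^sup>2) \<partial>M) \<le> (\<integral>\<^sup>+x. 2 * ennreal ((f x)\<^sup>2) + 2 * ennreal ((g x)\<^sup>2) \<partial>M)"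
  proof (rule nn_integral_mono)
    fix x
    have "ennreal ((f x - g x)\<^sup>2) \<le> ennreal (2 * (f x)\<^sup>2 + 2 * (g x)\<^sup>2)"
      by (rule ennreal_leI) (rule sq_diff_le')
    also have "\<dots> = 2 * ennreal ((f x)\<^sup>2) + 2 * ennreal ((g x)\<^sup>2)"
      by (simp add: ennreal_plus ennreal_mult)
    finally show "ennreal ((f x - g x)\<^sup>2) \<le> 2 * ennreal ((f x)\<^sup>2) + 2 * ennreal ((g x)\<^sup>2)" .
  qed
  also have "\<dots> = 2 * (\<integral>\<^sup>+x. ennreal ((f x)\<^sup>2) \<partial>M) + 2 * (\<integral>\<^sup>+x. ennreal ((g x)\<^sup>2) \<partial>M)"
    using assms by (simp add: nn_integral_add nn_integral_cmult)
  finally show ?thesis .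
qed




lemma ev_pick:
  assumes "eventually P (at (0::real))"
  obtains t where "t \<noteq> 0" "P t"
proof -
  obtain d where d: "d > 0" "\<forall>x. x \<noteq> 0 \<and> dist x 0 < d \<longrightarrow> P x"
    using assms unfolding eventually_at by auto
  then have "P (d/2)" by auto
  moreover have "d/2 \<noteq> 0" using d by simp
  ultimately show ?thesis using that by blast
qed

lemma nn_sq_scale:
  assumes g: "g \<in> borel_measurable M"
  shows "(\<integral>\<^sup>+x. ennreal ((t * g x)\<^sup>2) \<partial>M) = ennreal (t\<^sup>2) * (\<integral>\<^sup>+x. ennreal ((g x)\<^sup>2) \<partial>M)"
proof -
  have "(\<integral>\<^sup>+x. ennreal ((t * g x)\<^sup>2) \<partial>M) = (\<integral>\<^sup>+x. ennreal (t\<^sup>2) * ennreal ((g x)\<^sup>2) \<partial>M)"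
    by (simp add: power_mult_distrib ennreal_mult)
  also have "\<dots> = ennreal (t\<^sup>2) * (\<integral>\<^sup>+x. ennreal ((g x)\<^sup>2) \<partial>M)"
    by (rule nn_integral_cmult) (use g in measurable)
  finally show ?thesis .
qed

context
  fixes \<Theta> :: "(real^'p::finite) set" and P :: "real^'p \<Rightarrow> real measure" and \<theta> :: "real^'p"
  assumes o\<Theta>: "open \<Theta>" and P\<Theta>: "\<forall>\<eta>\<in>\<Theta>. P2ac (P \<eta>)" and \<theta>\<Theta>: "\<theta> \<in> \<Theta>"
begin

lemma Pth: "P2ac (P \<theta>)" using P\<Theta> \<theta>\<Theta> by blast

lemma TL_T0:
  assumes TL: "transport_linearization TYPE('p) \<Theta> P \<theta> \<Phi>" and e: "\<epsilon> > 0"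
  shows "eventually (\<lambda>t. \<theta> + t *\<^sub>R h \<in> \<Theta> \<and>
     (\<integral>\<^sup>+u\<in>{0<..<1}. ennreal ((quantile (P (\<theta> + t *\<^sub>R h)) u - quantile (P \<theta>) u - t * (\<Phi> (quantile (P \<theta>) u) \<bullet> h))\<^sup>2) \<partial>lborel)
       \<le> ennreal (\<epsilon> * t\<^sup>2)) (at 0)"
proof -
  have Pm: "\<Phi> \<in> borel_measurable borel" using TL unfolding transport_linearization_def by blast
  have H: "\<forall>\<epsilon>>0. eventually (\<lambda>t. (\<integral>\<^sup>+x. ennreal ((T0 (P \<theta>) (P (\<theta> + t *\<^sub>R h)) x - x - t * (\<Phi> x \<bullet> h))\<^sup>2) \<partial>P \<theta>)
                                  \<le> ennreal (\<epsilon> * t\<^sup>2)) (at 0)"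
  proof -
    have "\<forall>t. \<theta> + t *\<^sub>R h \<in> \<Theta> \<longrightarrow> is_ot_map (P \<theta>) (P (\<theta> + t *\<^sub>R h)) (T0 (P \<theta>) (P (\<theta> + t *\<^sub>R h)))"
      using OT_T0[OF Pth] P\<Theta> by blast
    then show ?thesis using TL unfolding transport_linearization_def
      by (elim conjE allE[of _ h] allE[of _ "\<lambda>t. T0 (P \<theta>) (P (\<theta> + t *\<^sub>R h))"]) (elim impE)
  qed
  show ?thesis
    using ev_in[OF o\<Theta> \<theta>\<Theta>, of h] H[rule_format, OF e]
  proof eventually_elim
    case (elim t)
    have Pt: "P2ac (P (\<theta> + t *\<^sub>R h))" using elim P\<Theta> by blast
    have c: "(\<lambda>x. t * (\<Phi> x \<bullet> h)) \<in> borel_measurable borel" using Pm by measurable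
    show ?case using elim cost_formula[OF Pth Pt c] by simp
  qed
qed

lemma QG_ev:
  assumes QG: "quantile_gradient P \<theta> G" and e: "\<epsilon> > 0"
  shows "eventually (\<lambda>t. \<theta> + t *\<^sub>R h \<in> \<Theta> \<and>
     (\<integral>\<^sup>+u\<in>{0<..<1}. ennreal ((quantile (P (\<theta> + t *\<^sub>R h)) u - quantile (P \<theta>) u - t * (G u \<bullet> h))\<^sup>2) \<partial>lborel)
       \<le> ennreal (\<epsilon> * t\<^sup>2)) (at 0)"
proof -
  have "eventually (\<lambda>t. (\<integral>\<^sup>+u\<in>{0<..<1}. ennreal ((quantile (P (\<theta> + t *\<^sub>R h)) u - quantile (P \<theta>) u - t * (G u \<bullet> h))\<^sup>2) \<partial>lborel)
       \<le> ennreal (\<epsilon> * t\<^sup>2)) (at 0)"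
    using QG e unfolding quantile_gradient_def by blast
  then show ?thesis using ev_in[OF o\<Theta> \<theta>\<Theta>, of h] by eventually_elim simp
qed

lemma Phi_L2:
  assumes TL: "transport_linearization TYPE('p) \<Theta> P \<theta> \<Phi>"
  shows "(\<integral>\<^sup>+u. ennreal ((\<Phi> (quantile (P \<theta>) u) $ i)\<^sup>2) \<partial>U) < \<infinity>"
proof -
  have Pm: "\<Phi> \<in> borel_measurable borel" using TL unfolding transport_linearization_def by blast
  obtain t where t: "t \<noteq> 0" "\<theta> + t *\<^sub>R axis i 1 \<in> \<Theta>"
    and c: "(\<integral>\<^sup>+u\<in>{0<..<1}. ennreal ((quantile (P (\<theta> + t *\<^sub>R axis i 1)) u - quantile (P \<theta>) u
              - t * (\<Phi> (quantile (P \<theta>) u) \<bullet> axis i 1))\<^sup>2) \<partial>lborel) \<le> ennreal (1 * t\<^sup>2)"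
    using ev_pick[OF TL_T0[OF TL, of 1 "axis i 1"]] by auto
  define Q where "Q = quantile (P \<theta>)"
  define Qt where "Qt = quantile (P (\<theta> + t *\<^sub>R axis i 1))"
  define g where "g u = \<Phi> (Q u) $ i" for u
  have Pt: "P2ac (P (\<theta> + t *\<^sub>R axis i 1))" using t P\<Theta> by blast
  have mQ: "Q \<in> borel_measurable U" unfolding Q_def by (rule quantile_meas_U[OF Pth])
  have mQt: "Qt \<in> borel_measurable U" unfolding Qt_def by (rule quantile_meas_U[OF Pt])
  have mg: "g \<in> borel_measurable U" unfolding g_def
    using measurable_compose[OF measurable_compose[OF mQ Pm] borel_measurable_nth] .
  have c': "(\<integral>\<^sup>+u. ennreal ((Qt u - Q u - t * g u)\<^sup>2) \<partial>U) \<le> ennreal (t\<^sup>2)"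
    unfolding setU Q_def Qt_def g_def using c by (simp only: inner_axis inner_real_def mult_1_right mult_1)
  have "(\<integral>\<^sup>+u. ennreal ((Qt u - Q u)\<^sup>2) \<partial>U) \<le> 2 * (\<integral>\<^sup>+u. ennreal ((Qt u)\<^sup>2) \<partial>U) + 2 * (\<integral>\<^sup>+u. ennreal ((Q u)\<^sup>2) \<partial>U)"
    by (rule nn_sq_diff[OF mQt mQ])
  also have "\<dots> < \<infinity>" using quantile_sq_nn_finite[OF Pth] quantile_sq_nn_finite[OF Pt]
    unfolding Q_def Qt_def by (simp add: ennreal_mult_less_top)
  finally have fA: "(\<integral>\<^sup>+u. ennreal ((Qt u - Q u)\<^sup>2) \<partial>U) < \<infinity>" .
  have "(\<integral>\<^sup>+u. ennreal (((Qt u - Q u) - (Qt u - Q u - t * g u))\<^sup>2) \<partial>U) \<le>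
        2 * (\<integral>\<^sup>+u. ennreal ((Qt u - Q u)\<^sup>2) \<partial>U) + 2 * (\<integral>\<^sup>+u. ennreal ((Qt u - Q u - t * g u)\<^sup>2) \<partial>U)"
  proof (rule nn_sq_diff)
    show "(\<lambda>u. Qt u - Q u) \<in> borel_measurable U" using mQt mQ by measurable
    show "(\<lambda>u. Qt u - Q u - t * g u) \<in> borel_measurable U" using mQt mQ mg by measurable
  qed
  also have "\<dots> < \<infinity>"
  proof -
    have "(\<integral>\<^sup>+u. ennreal ((Qt u - Q u - t * g u)\<^sup>2) \<partial>U) < \<infinity>"
      using c' by (rule order.strict_trans1) simp
    then show ?thesis using fA by (simp add: ennreal_mult_less_top)
  qed
  finally have "(\<integral>\<^sup>+u. ennreal ((t * g u)\<^sup>2) \<partial>U) < \<infinity>" by simp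
  then have "ennreal (t\<^sup>2) * (\<integral>\<^sup>+u. ennreal ((g u)\<^sup>2) \<partial>U) < \<infinity>" unfolding nn_sq_scale[OF mg] .
  then have "ennreal (t\<^sup>2) = 0 \<or> (\<integral>\<^sup>+u. ennreal ((g u)\<^sup>2) \<partial>U) = 0 \<or>
    (ennreal (t\<^sup>2) < \<top> \<and> (\<integral>\<^sup>+u. ennreal ((g u)\<^sup>2) \<partial>U) < \<top>)"
    by (simp only: ennreal_mult_less_top infinity_ennreal_def)
  moreover have "ennreal (t\<^sup>2) \<noteq> 0" using t(1) by simp
  ultimately have "(\<integral>\<^sup>+u. ennreal ((g u)\<^sup>2) \<partial>U) < \<top>" by fastforce
  then show ?thesis unfolding g_def Q_def by simp
qed

end



lemma norm_sq_vec: "(norm (x::real^'n))\<^sup>2 = (\<Sum>i\<in>UNIV. (x $ i)\<^sup>2)"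
  unfolding power2_norm_eq_inner inner_vec_def by (simp add: power2_eq_square)

context
  fixes \<Theta> :: "(real^'p::finite) set" and P :: "real^'p \<Rightarrow> real measure" and \<theta> :: "real^'p"
  assumes o\<Theta>: "open \<Theta>" and P\<Theta>: "\<forall>\<eta>\<in>\<Theta>. P2ac (P \<eta>)" and \<theta>\<Theta>: "\<theta> \<in> \<Theta>"
begin

lemma Pth': "P2ac (P \<theta>)" using P\<Theta> \<theta>\<Theta> by blast

lemma DWS_imp_QG:
  assumes TL: "transport_linearization TYPE('p) \<Theta> P \<theta> \<Phi>"
  shows "quantile_gradient P \<theta> (\<lambda>u. \<Phi> (Qm (P \<theta>) u))"
  unfolding quantile_gradient_def
proof (intro conjI allI impI)
  have Pm: "\<Phi> \<in> borel_measurable borel" using TL unfolding transport_linearization_def by blast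
  show "(\<lambda>u. \<Phi> (Qm (P \<theta>) u)) \<in> borel_measurable borel"
    using measurable_compose[OF Qm_meas[OF Pth'] Pm] .
  have "(\<integral>\<^sup>+u\<in>{0..1}. ennreal ((norm (\<Phi> (Qm (P \<theta>) u)))\<^sup>2) \<partial>lborel)
      = (\<integral>\<^sup>+u. ennreal ((norm (\<Phi> (Qm (P \<theta>) u)))\<^sup>2) \<partial>U)"
    unfolding endpoints_nn setU ..
  also have "\<dots> = (\<integral>\<^sup>+u. (\<Sum>i\<in>UNIV. ennreal ((\<Phi> (quantile (P \<theta>) u) $ i)\<^sup>2)) \<partial>U)"
  proof (rule nn_integral_cong)
    fix u assume "u \<in> space U"
    then have "Qm (P \<theta>) u = quantile (P \<theta>) u" unfolding Qm_def by simp
    then show "ennreal ((norm (\<Phi> (Qm (P \<theta>) u)))\<^sup>2) = (\<Sum>i\<in>UNIV. ennreal ((\<Phi> (quantile (P \<theta>) u) $ i)\<^sup>2))"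
      unfolding norm_sq_vec by (simp add: sum_ennreal)
  qed
  also have "\<dots> = (\<Sum>i\<in>UNIV. (\<integral>\<^sup>+u. ennreal ((\<Phi> (quantile (P \<theta>) u) $ i)\<^sup>2) \<partial>U))"
  proof (rule nn_integral_sum)
    fix i
    have "(\<lambda>u. \<Phi> (quantile (P \<theta>) u) $ i) \<in> borel_measurable U"
      using measurable_compose[OF measurable_compose[OF quantile_meas_U[OF Pth'] Pm] borel_measurable_nth] .
    then show "(\<lambda>u. ennreal ((\<Phi> (quantile (P \<theta>) u) $ i)\<^sup>2)) \<in> borel_measurable U" by measurable
  qed
  also have "\<dots> < \<infinity>"
    using Phi_L2[OF o\<Theta> P\<Theta> \<theta>\<Theta> TL] by (simp add: ennreal_sum_less_top)
  finally show "(\<integral>\<^sup>+u\<in>{0..1}. ennreal ((norm (\<Phi> (Qm (P \<theta>) u)))\<^sup>2) \<partial>lborel) < \<infinity>" .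
  fix h :: "real^'p" and \<epsilon> :: real assume e: "\<epsilon> > 0"
  show "\<forall>\<^sub>F t in at 0. (\<integral>\<^sup>+u\<in>{0<..<1}. ennreal ((quantile (P (\<theta> + t *\<^sub>R h)) u - quantile (P \<theta>) u - t * (\<Phi> (Qm (P \<theta>) u) \<bullet> h))\<^sup>2) \<partial>lborel) \<le> ennreal (\<epsilon> * t\<^sup>2)"
    using TL_T0[OF o\<Theta> P\<Theta> \<theta>\<Theta> TL e, of h]
  proof eventually_elim
    case (elim t)
    have "(\<integral>\<^sup>+u\<in>{0<..<1}. ennreal ((quantile (P (\<theta> + t *\<^sub>R h)) u - quantile (P \<theta>) u - t * (\<Phi> (Qm (P \<theta>) u) \<bullet> h))\<^sup>2) \<partial>lborel)
      = (\<integral>\<^sup>+u\<in>{0<..<1}. ennreal ((quantile (P (\<theta> + t *\<^sub>R h)) u - quantile (P \<theta>) u - t * (\<Phi> (quantile (P \<theta>) u) \<bullet> h))\<^sup>2) \<partial>lborel)"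
      by (rule nn_integral_cong) (simp add: Qm_def indicator_def)
    then show ?case using elim by simp
  qed
qed

lemma QG_imp_TL:
  assumes QG: "quantile_gradient P \<theta> G"
  shows "transport_linearization TYPE('p) \<Theta> P \<theta> (\<lambda>x. G (cdf (P \<theta>) x))"
  unfolding transport_linearization_def
proof (intro conjI allI impI)
  have Gm: "G \<in> borel_measurable borel" using QG unfolding quantile_gradient_def by blast
  show "(\<lambda>x. G (cdf (P \<theta>) x)) \<in> borel_measurable borel"
    using measurable_compose[OF cdf_meas[OF Pth'] Gm] .
  fix h :: "real^'p" and T :: "real \<Rightarrow> real \<Rightarrow> real" and \<epsilon> :: real
  assume T: "\<forall>t. \<theta> + t *\<^sub>R h \<in> \<Theta> \<longrightarrow> is_ot_map (P \<theta>) (P (\<theta> + t *\<^sub>R h)) (T t)" and e: "\<epsilon> > 0"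
  show "\<forall>\<^sub>F t in at 0. (\<integral>\<^sup>+x. ennreal ((T t x - x - t * (G (cdf (P \<theta>) x) \<bullet> h))\<^sup>2) \<partial>P \<theta>) \<le> ennreal (\<epsilon> * t\<^sup>2)"
    using QG_ev[OF o\<Theta> P\<Theta> \<theta>\<Theta> QG e, of h]
  proof eventually_elim
    case (elim t)
    have Pt: "P2ac (P (\<theta> + t *\<^sub>R h))" using elim P\<Theta> by blast
    have c: "(\<lambda>x. t * (G (cdf (P \<theta>) x) \<bullet> h)) \<in> borel_measurable borel"
      using measurable_compose[OF cdf_meas[OF Pth'] Gm] by measurable
    have "(\<integral>\<^sup>+x. ennreal ((T t x - x - t * (G (cdf (P \<theta>) x) \<bullet> h))\<^sup>2) \<partial>P \<theta>)
        = (\<integral>\<^sup>+x. ennreal ((T0 (P \<theta>) (P (\<theta> + t *\<^sub>R h)) x - x - t * (G (cdf (P \<theta>) x) \<bullet> h))\<^sup>2) \<partial>P \<theta>)"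
      by (rule cost_OT[OF Pth' Pt]) (use T elim in blast)
    also have "\<dots> = (\<integral>\<^sup>+u\<in>{0<..<1}. ennreal ((quantile (P (\<theta> + t *\<^sub>R h)) u - quantile (P \<theta>) u
                 - t * (G (cdf (P \<theta>) (quantile (P \<theta>) u)) \<bullet> h))\<^sup>2) \<partial>lborel)"
      by (rule cost_formula[OF Pth' Pt c])
    also have "\<dots> = (\<integral>\<^sup>+u\<in>{0<..<1}. ennreal ((quantile (P (\<theta> + t *\<^sub>R h)) u - quantile (P \<theta>) u
                 - t * (G u \<bullet> h))\<^sup>2) \<partial>lborel)"
      by (rule nn_integral_cong) (simp add: cdf_quantile[OF Pth'] indicator_def)
    finally show ?case using elim by simp
  qed
qed

end



context
  fixes \<Theta> :: "(real^'p::finite) set" and P :: "real^'p \<Rightarrow> real measure" and \<theta> :: "real^'p"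
  assumes o\<Theta>: "open \<Theta>" and P\<Theta>: "\<forall>\<eta>\<in>\<Theta>. P2ac (P \<eta>)" and \<theta>\<Theta>: "\<theta> \<in> \<Theta>"
begin

lemma Pth'': "P2ac (P \<theta>)" using P\<Theta> \<theta>\<Theta> by blast

lemma match_AE:
  assumes TL: "transport_linearization TYPE('p) \<Theta> P \<theta> \<Phi>" and QG: "quantile_gradient P \<theta> G"
  shows "AE u in U. \<Phi> (quantile (P \<theta>) u) $ i = G u $ i"
proof -
  have Pm: "\<Phi> \<in> borel_measurable borel" using TL unfolding transport_linearization_def by blast
  have Gm: "G \<in> borel_measurable borel" using QG unfolding quantile_gradient_def by blast
  define Q where "Q = quantile (P \<theta>)"
  define g where "g u = \<Phi> (Q u) $ i - G u $ i" for u
  have mQ: "Q \<in> borel_measurable U" unfolding Q_def by (rule quantile_meas_U[OF Pth''])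
  have mPi: "(\<lambda>u. \<Phi> (Q u) $ i) \<in> borel_measurable U"
    using measurable_compose[OF measurable_compose[OF mQ Pm] borel_measurable_nth] .
  have mGi: "(\<lambda>u. G u $ i) \<in> borel_measurable U"
  proof -
    have "G \<in> borel_measurable U" unfolding U_def by (rule measurable_restrict_space1) (simp add: Gm)
    then show ?thesis using measurable_compose[OF _ borel_measurable_nth] by blast
  qed
  have mg: "g \<in> borel_measurable U" unfolding g_def[abs_def] using mPi mGi by measurable
  have bound: "(\<integral>\<^sup>+u. ennreal ((g u)\<^sup>2) \<partial>U) \<le> ennreal (4 * \<epsilon>)" if e: "\<epsilon> > 0" for \<epsilon>
  proof -
    let ?h = "axis i (1::real) :: real^'p"
    have "eventually (\<lambda>t. (\<theta> + t *\<^sub>R ?h \<in> \<Theta> \<and>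
       (\<integral>\<^sup>+u\<in>{0<..<1}. ennreal ((quantile (P (\<theta> + t *\<^sub>R ?h)) u - quantile (P \<theta>) u - t * (\<Phi> (quantile (P \<theta>) u) \<bullet> ?h))\<^sup>2) \<partial>lborel)
         \<le> ennreal (\<epsilon> * t\<^sup>2)) \<and> (\<theta> + t *\<^sub>R ?h \<in> \<Theta> \<and>
       (\<integral>\<^sup>+u\<in>{0<..<1}. ennreal ((quantile (P (\<theta> + t *\<^sub>R ?h)) u - quantile (P \<theta>) u - t * (G u \<bullet> ?h))\<^sup>2) \<partial>lborel)
         \<le> ennreal (\<epsilon> * t\<^sup>2))) (at 0)"
      by (rule eventually_conj[OF TL_T0[OF o\<Theta> P\<Theta> \<theta>\<Theta> TL e] QG_ev[OF o\<Theta> P\<Theta> \<theta>\<Theta> QG e]])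
    then obtain t where t: "t \<noteq> 0" "\<theta> + t *\<^sub>R ?h \<in> \<Theta>"
      and c1: "(\<integral>\<^sup>+u\<in>{0<..<1}. ennreal ((quantile (P (\<theta> + t *\<^sub>R ?h)) u - quantile (P \<theta>) u - t * (\<Phi> (quantile (P \<theta>) u) \<bullet> ?h))\<^sup>2) \<partial>lborel)
         \<le> ennreal (\<epsilon> * t\<^sup>2)"
      and c2: "(\<integral>\<^sup>+u\<in>{0<..<1}. ennreal ((quantile (P (\<theta> + t *\<^sub>R ?h)) u - quantile (P \<theta>) u - t * (G u \<bullet> ?h))\<^sup>2) \<partial>lborel)
         \<le> ennreal (\<epsilon> * t\<^sup>2)"
      by (rule ev_pick) blast
    define Qt where "Qt = quantile (P (\<theta> + t *\<^sub>R ?h))"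
    have Pt: "P2ac (P (\<theta> + t *\<^sub>R ?h))" using t P\<Theta> by blast
    have mQt: "Qt \<in> borel_measurable U" unfolding Qt_def by (rule quantile_meas_U[OF Pt])
    have c1': "(\<integral>\<^sup>+u. ennreal ((Qt u - Q u - t * (\<Phi> (Q u) $ i))\<^sup>2) \<partial>U) \<le> ennreal (\<epsilon> * t\<^sup>2)"
      unfolding setU Q_def Qt_def using c1 by (simp only: inner_axis inner_real_def mult_1_right mult_1)
    have c2': "(\<integral>\<^sup>+u. ennreal ((Qt u - Q u - t * (G u $ i))\<^sup>2) \<partial>U) \<le> ennreal (\<epsilon> * t\<^sup>2)"
      unfolding setU Q_def Qt_def using c2 by (simp only: inner_axis inner_real_def mult_1_right mult_1)
    have "(\<integral>\<^sup>+u. ennreal (((Qt u - Q u - t * (G u $ i)) - (Qt u - Q u - t * (\<Phi> (Q u) $ i)))\<^sup>2) \<partial>U) \<le>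
        2 * (\<integral>\<^sup>+u. ennreal ((Qt u - Q u - t * (G u $ i))\<^sup>2) \<partial>U) + 2 * (\<integral>\<^sup>+u. ennreal ((Qt u - Q u - t * (\<Phi> (Q u) $ i))\<^sup>2) \<partial>U)"
    proof (rule nn_sq_diff)
      show "(\<lambda>u. Qt u - Q u - t * (G u $ i)) \<in> borel_measurable U" using mQt mQ mGi by measurable
      show "(\<lambda>u. Qt u - Q u - t * (\<Phi> (Q u) $ i)) \<in> borel_measurable U" using mQt mQ mPi by measurable
    qed
    also have "\<dots> \<le> 2 * ennreal (\<epsilon> * t\<^sup>2) + 2 * ennreal (\<epsilon> * t\<^sup>2)"
      using c1' c2' by (intro add_mono mult_left_mono) auto
    also have "\<dots> = ennreal (t\<^sup>2) * ennreal (4 * \<epsilon>)"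
    proof -
      have x0: "0 \<le> \<epsilon> * t\<^sup>2" using e by simp
      have "ennreal (t\<^sup>2) * ennreal (4 * \<epsilon>) = ennreal (t\<^sup>2 * (4 * \<epsilon>))"
        using e by (simp add: ennreal_mult)
      also have "t\<^sup>2 * (4 * \<epsilon>) = 2 * (\<epsilon> * t\<^sup>2) + 2 * (\<epsilon> * t\<^sup>2)" by (simp add: algebra_simps)
      also have "ennreal (2 * (\<epsilon> * t\<^sup>2) + 2 * (\<epsilon> * t\<^sup>2)) = ennreal (2 * (\<epsilon> * t\<^sup>2)) + ennreal (2 * (\<epsilon> * t\<^sup>2))"
        using x0 by (intro ennreal_plus) auto
      also have "ennreal (2 * (\<epsilon> * t\<^sup>2)) = 2 * ennreal (\<epsilon> * t\<^sup>2)"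
        using x0 by (simp add: ennreal_mult)
      finally show ?thesis by simp
    qed
    finally have "(\<integral>\<^sup>+u. ennreal ((t * g u)\<^sup>2) \<partial>U) \<le> ennreal (t\<^sup>2) * ennreal (4 * \<epsilon>)"
      unfolding g_def by (simp add: algebra_simps)
    then have "ennreal (t\<^sup>2) * (\<integral>\<^sup>+u. ennreal ((g u)\<^sup>2) \<partial>U) \<le> ennreal (t\<^sup>2) * ennreal (4 * \<epsilon>)"
      unfolding nn_sq_scale[OF mg] .
    then show ?thesis using t(1) by (subst (asm) ennreal_mult_le_mult_iff) auto
  qed
  have "(\<integral>\<^sup>+u. ennreal ((g u)\<^sup>2) \<partial>U) \<le> 0"
  proof (rule ennreal_le_epsilon)
    fix e :: real assume "0 < e"
    then show "(\<integral>\<^sup>+u. ennreal ((g u)\<^sup>2) \<partial>U) \<le> 0 + ennreal e" using bound[of "e/4"] by simp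
  qed
  then have "(\<integral>\<^sup>+u. ennreal ((g u)\<^sup>2) \<partial>U) = 0" by simp
  then have "AE u in U. ennreal ((g u)\<^sup>2) = 0" by (subst (asm) nn_integral_0_iff_AE) (use mg in measurable)
  then show ?thesis by eventually_elim (simp add: g_def Q_def)
qed

lemma wass_eq:
  assumes TL: "transport_linearization TYPE('p) \<Theta> P \<theta> \<Phi>" and QG: "quantile_gradient P \<theta> G"
  shows "wass_info (P \<theta>) \<Phi> = (\<chi> i j. \<integral>u. G u $ i * G u $ j \<partial>(restrict_space lborel {0..1}))"
proof -
  have Pm: "\<Phi> \<in> borel_measurable borel" using TL unfolding transport_linearization_def by blast
  have Gm: "G \<in> borel_measurable borel" using QG unfolding quantile_gradient_def by blast
  have ae: "AE u in U. \<forall>i\<in>UNIV. \<Phi> (quantile (P \<theta>) u) $ i = G u $ i"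
    by (subst AE_finite_all) (auto intro: match_AE[OF TL QG])
  have eq: "(\<integral>x. \<Phi> x $ i * \<Phi> x $ j \<partial>P \<theta>) = (\<integral>u. G u $ i * G u $ j \<partial>(restrict_space lborel {0..1}))" for i j
  proof -
    have c1: "(\<lambda>x. \<Phi> x $ k) \<in> borel_measurable borel" for k using measurable_compose[OF Pm borel_measurable_nth] .
    have c2: "(\<lambda>x. G x $ k) \<in> borel_measurable borel" for k using measurable_compose[OF Gm borel_measurable_nth] .
    have m1: "(\<lambda>x. \<Phi> x $ i * \<Phi> x $ j) \<in> borel_measurable borel" using c1[of i] c1[of j] by measurable
    have m2: "(\<lambda>u. G u $ i * G u $ j) \<in> borel_measurable borel" using c2[of i] c2[of j] by measurable
    have "(\<integral>x. \<Phi> x $ i * \<Phi> x $ j \<partial>P \<theta>) = (\<integral>u. \<Phi> (quantile (P \<theta>) u) $ i * \<Phi> (quantile (P \<theta>) u) $ j \<partial>U)"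
      by (rule transfer_int(1)[OF Pth'' m1])
    also have "\<dots> = (\<integral>u. G u $ i * G u $ j \<partial>U)"
    proof (rule integral_cong_AE)
      show "(\<lambda>u. \<Phi> (quantile (P \<theta>) u) $ i * \<Phi> (quantile (P \<theta>) u) $ j) \<in> borel_measurable U"
        using measurable_compose[OF quantile_meas_U[OF Pth''] m1] .
      show "(\<lambda>u. G u $ i * G u $ j) \<in> borel_measurable U"
        unfolding U_def by (rule measurable_restrict_space1) (simp add: m2)
      show "AE u in U. \<Phi> (quantile (P \<theta>) u) $ i * \<Phi> (quantile (P \<theta>) u) $ j = G u $ i * G u $ j"
        using ae by eventually_elim simp
    qed
    also have "\<dots> = (\<integral>u. G u $ i * G u $ j \<partial>(restrict_space lborel {0..1}))"
      by (rule endpoints_int[OF m2, symmetric])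
    finally show ?thesis .
  qed
  show ?thesis unfolding wass_info_def using eq by simp
qed

end

theorem lemma6p8:
  fixes \<Theta> :: "(real^'p::finite) set" and P :: "real^'p \<Rightarrow> real measure" and \<theta> :: "real^'p"
  assumes "open \<Theta>" and "\<forall>\<eta>\<in>\<Theta>. P2ac (P \<eta>)" and "\<theta> \<in> \<Theta>"
  shows "(DWS \<Theta> P \<theta> \<longleftrightarrow> (\<exists>G. quantile_gradient P \<theta> G)) \<and>
         (\<forall>\<Phi> G. transport_linearization TYPE('p) \<Theta> P \<theta> \<Phi> \<longrightarrow> quantile_gradient P \<theta> G \<longrightarrow>
            wass_info (P \<theta>) \<Phi> = (\<chi> i j. \<integral>u. G u $ i * G u $ j \<partial>(restrict_space lborel {0..1})))"
proof (intro conjI allI impI iffI)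
  assume "DWS \<Theta> P \<theta>"
  then obtain \<Phi> where "transport_linearization TYPE('p) \<Theta> P \<theta> \<Phi>" unfolding DWS_def by blast
  then show "\<exists>G. quantile_gradient P \<theta> G" using DWS_imp_QG[OF assms] by blast
next
  assume "\<exists>G. quantile_gradient P \<theta> G"
  then obtain G where "quantile_gradient P \<theta> G" by blast
  then show "DWS \<Theta> P \<theta>" unfolding DWS_def using QG_imp_TL[OF assms] by blast
next
  fix \<Phi> G
  assume "transport_linearization TYPE('p) \<Theta> P \<theta> \<Phi>" "quantile_gradient P \<theta> G"
  then show "wass_info (P \<theta>) \<Phi> = (\<chi> i j. \<integral>u. G u $ i * G u $ j \<partial>(restrict_space lborel {0..1}))"
    by (rule wass_eq[OF assms])
qed



end
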